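(* The maximal adjacency cliques of $\mathcal G$ (i.e. the subsets of $\mathcal G$ consisting of mutually adjacent elements that are maximal with respect to inclusion among such subsets) are precisely the stars and the tops.
   Context: $K$ is a (not necessarily commutative) field and $V$ is a left vector space over $K$ of arbitrary (possibly infinite) dimension with $\dim V>2$. $\mathcal G:=\{X\le V\mid X\cong V/X\}$, assumed nonempty. Two elements $X,Y\in\mathcal G$ are adjacent if $\dim((X+Y)/X)=\dim((X+Y)/Y)=1$. A star is a set $\mathcal G[M\rangle:=\{E\le V\mid M\le E,\ \dim(E/M)=1\}$, where $M\le V$ is a subspace for which some $X\in\mathcal G$ satisfies $M\le X$, $\dim(X/M)=1$. A top is a set $\mathcal G\langle N]:=\{E\le V\mid E\le N,\ \dim(N/E)=1\}$, where $N\le V$ is a subspace for which some $X\in\mathcal G$ satisfies $X\le N$, $\dim(N/X)=1$. *)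

theory Defs
  imports Main
begin

text \<open>A left vector space over a (not necessarily commutative) field K, i.e. a
  division ring. The space V is the whole carrier type 'v; scalar multiplication
  is the parameter sc.\<close>

definition left_vector_space :: "('k::division_ring \<Rightarrow> 'v::ab_group_add \<Rightarrow> 'v) \<Rightarrow> bool" where
  "left_vector_space sc \<longleftrightarrow>
     (\<forall>a x y. sc a (x + y) = sc a x + sc a y) \<and>
     (\<forall>a b x. sc (a + b) x = sc a x + sc b x) \<and>
     (\<forall>a b x. sc (a * b) x = sc a (sc b x)) \<and>
     (\<forall>x. sc 1 x = x)"

definition lsubspace :: "('k::division_ring \<Rightarrow> 'v::ab_group_add \<Rightarrow> 'v) \<Rightarrow> 'v set \<Rightarrow> bool" where
  "lsubspace sc X \<longleftrightarrow> 0 \<in> X \<and> (\<forall>x\<in>X. \<forall>y\<in>X. x + y \<in> X) \<and> (\<forall>a. \<forall>x\<in>X. sc a x \<in> X)"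

definition ssum :: "'v::ab_group_add set \<Rightarrow> 'v set \<Rightarrow> 'v set" where
  "ssum X Y = {x + y | x y. x \<in> X \<and> y \<in> Y}"

text \<open>dim(E/M) = 1 for subspaces M \<le> E: the quotient E/M is spanned by one nonzero coset.\<close>
definition codim1 :: "('k::division_ring \<Rightarrow> 'v::ab_group_add \<Rightarrow> 'v) \<Rightarrow> 'v set \<Rightarrow> 'v set \<Rightarrow> bool" where
  "codim1 sc M E \<longleftrightarrow> M \<subseteq> E \<and> (\<exists>v\<in>E. v \<notin> M \<and> E = {m + sc c v | m c. m \<in> M})"

text \<open>X \<cong> V/X (V = UNIV), expressed via the first isomorphism theorem: there is a
  linear map from V onto X whose kernel is X.\<close>
definition iso_to_quotient :: "('k::division_ring \<Rightarrow> 'v::ab_group_add \<Rightarrow> 'v) \<Rightarrow> 'v set \<Rightarrow> bool" where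
  "iso_to_quotient sc X \<longleftrightarrow>
     (\<exists>f. (\<forall>x y. f (x + y) = f x + f y) \<and> (\<forall>a x. f (sc a x) = sc a (f x)) \<and>
          range f = X \<and> {v. f v = 0} = X)"

definition GG :: "('k::division_ring \<Rightarrow> 'v::ab_group_add \<Rightarrow> 'v) \<Rightarrow> 'v set set" where
  "GG sc = {X. lsubspace sc X \<and> iso_to_quotient sc X}"

definition adjacent :: "('k::division_ring \<Rightarrow> 'v::ab_group_add \<Rightarrow> 'v) \<Rightarrow> 'v set \<Rightarrow> 'v set \<Rightarrow> bool" where
  "adjacent sc X Y \<longleftrightarrow> codim1 sc X (ssum X Y) \<and> codim1 sc Y (ssum X Y)"

definition adj_clique :: "('k::division_ring \<Rightarrow> 'v::ab_group_add \<Rightarrow> 'v) \<Rightarrow> 'v set set \<Rightarrow> bool" where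
  "adj_clique sc C \<longleftrightarrow> C \<subseteq> GG sc \<and> (\<forall>X\<in>C. \<forall>Y\<in>C. X \<noteq> Y \<longrightarrow> adjacent sc X Y)"

definition max_adj_clique :: "('k::division_ring \<Rightarrow> 'v::ab_group_add \<Rightarrow> 'v) \<Rightarrow> 'v set set \<Rightarrow> bool" where
  "max_adj_clique sc C \<longleftrightarrow> adj_clique sc C \<and> (\<forall>D. adj_clique sc D \<and> C \<subseteq> D \<longrightarrow> D = C)"

definition star :: "('k::division_ring \<Rightarrow> 'v::ab_group_add \<Rightarrow> 'v) \<Rightarrow> 'v set \<Rightarrow> 'v set set" where
  "star sc M = {E. lsubspace sc E \<and> codim1 sc M E}"

definition star_base :: "('k::division_ring \<Rightarrow> 'v::ab_group_add \<Rightarrow> 'v) \<Rightarrow> 'v set \<Rightarrow> bool" where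
  "star_base sc M \<longleftrightarrow> lsubspace sc M \<and> (\<exists>X\<in>GG sc. codim1 sc M X)"

definition topset :: "('k::division_ring \<Rightarrow> 'v::ab_group_add \<Rightarrow> 'v) \<Rightarrow> 'v set \<Rightarrow> 'v set set" where
  "topset sc N = {E. lsubspace sc E \<and> codim1 sc E N}"

definition top_base :: "('k::division_ring \<Rightarrow> 'v::ab_group_add \<Rightarrow> 'v) \<Rightarrow> 'v set \<Rightarrow> bool" where
  "top_base sc N \<longleftrightarrow> lsubspace sc N \<and> (\<exists>X\<in>GG sc. codim1 sc X N)"

definition dim_gt_2 :: "('k::division_ring \<Rightarrow> 'v::ab_group_add \<Rightarrow> 'v) \<Rightarrow> bool" where
  "dim_gt_2 sc \<longleftrightarrow> (\<exists>u v w. \<forall>a b c. sc a u + sc b v + sc c w = 0 \<longrightarrow> a = 0 \<and> b = 0 \<and> c = 0)"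

end

theory Submission
  imports Defs
begin

definition lin :: "('k::division_ring \<Rightarrow> 'v::ab_group_add \<Rightarrow> 'v) \<Rightarrow> 'v set \<Rightarrow> 'v \<Rightarrow> 'v set" where
  "lin sc M v = {m + sc c v | m c. m \<in> M}"

locale lvs =
  fixes sc :: "'k::division_ring \<Rightarrow> 'v::ab_group_add \<Rightarrow> 'v"
  assumes lvs: "left_vector_space sc"
begin

lemma sc_add: "sc a (x + y) = sc a x + sc a y"
  using lvs unfolding left_vector_space_def by blast
lemma sc_add_left: "sc (a + b) x = sc a x + sc b x"
  using lvs unfolding left_vector_space_def by blast
lemma sc_mult: "sc (a * b) x = sc a (sc b x)"
  using lvs unfolding left_vector_space_def by blast
lemma sc_one[simp]: "sc 1 x = x"
  using lvs unfolding left_vector_space_def by blast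
lemma sc_zero_left[simp]: "sc 0 x = 0"
proof -
  have "sc 0 x = sc 0 x + sc 0 x" using sc_add_left[of 0 0 x] by simp
  then show ?thesis by simp
qed
lemma sc_zero_right[simp]: "sc a 0 = 0"
proof -
  have "sc a 0 = sc a 0 + sc a 0" using sc_add[of a 0 0] by simp
  then show ?thesis by simp
qed
lemma sc_minus_left: "sc (- a) x = - sc a x"
proof -
  have "sc (- a) x + sc a x = 0" using sc_add_left[of "-a" a x] by simp
  then show ?thesis by (simp add: eq_neg_iff_add_eq_0)
qed
lemma sc_minus_right: "sc a (- x) = - sc a x"
proof -
  have "sc a (- x) + sc a x = 0" using sc_add[of a "-x" x] by simp
  then show ?thesis by (simp add: eq_neg_iff_add_eq_0)
qed
lemma sc_diff: "sc a (x - y) = sc a x - sc a y"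
  using sc_add[of a x "-y"] sc_minus_right[of a y] by simp
lemma sc_diff_left: "sc (a - b) x = sc a x - sc b x"
  using sc_add_left[of a "-b" x] sc_minus_left[of b x] by simp
lemma sc_inv: "c \<noteq> 0 \<Longrightarrow> sc (inverse c) (sc c x) = x"
  using sc_mult[of "inverse c" c x] by simp
lemma sc_inv2: "c \<noteq> 0 \<Longrightarrow> sc c (sc (inverse c) x) = x"
  using sc_mult[of c "inverse c" x] by simp
lemma sc_eq0: "sc a x = 0 \<Longrightarrow> a = 0 \<or> x = 0"
  using sc_inv[of a x] by auto

lemma sub0: "lsubspace sc S \<Longrightarrow> 0 \<in> S"
  unfolding lsubspace_def by blast
lemma sub_add: "lsubspace sc S \<Longrightarrow> x \<in> S \<Longrightarrow> y \<in> S \<Longrightarrow> x + y \<in> S"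
  unfolding lsubspace_def by blast
lemma sub_sc: "lsubspace sc S \<Longrightarrow> x \<in> S \<Longrightarrow> sc a x \<in> S"
  unfolding lsubspace_def by blast
lemma sub_minus: "lsubspace sc S \<Longrightarrow> x \<in> S \<Longrightarrow> - x \<in> S"
  using sub_sc[of S x "-1"] sc_minus_left[of 1 x] by simp
lemma sub_diff: "lsubspace sc S \<Longrightarrow> x \<in> S \<Longrightarrow> y \<in> S \<Longrightarrow> x - y \<in> S"
  using sub_add[of S x "-y"] sub_minus[of S y] by simp
lemma sub_UNIV: "lsubspace sc UNIV"
  unfolding lsubspace_def by blast
lemma sub_Int: "lsubspace sc S \<Longrightarrow> lsubspace sc T \<Longrightarrow> lsubspace sc (S \<inter> T)"
  unfolding lsubspace_def by blast
lemma sub_zero: "lsubspace sc {0}"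
  unfolding lsubspace_def by simp

lemma lin_sub: assumes "lsubspace sc M" shows "lsubspace sc (lin sc M v)"
  unfolding lsubspace_def lin_def
proof (intro conjI ballI allI)
  show "0 \<in> {m + sc c v |m c. m \<in> M}" using sub0[OF assms] by (intro CollectI exI[of _ 0]) auto
next
  fix x y assume "x \<in> {m + sc c v |m c. m \<in> M}" "y \<in> {m + sc c v |m c. m \<in> M}"
  then obtain m1 c1 m2 c2 where "x = m1 + sc c1 v" "y = m2 + sc c2 v" "m1 \<in> M" "m2 \<in> M" by blast
  then have "x + y = (m1 + m2) + sc (c1 + c2) v" "m1 + m2 \<in> M"
    using sc_add_left sub_add[OF assms] by (auto simp: algebra_simps)
  then show "x + y \<in> {m + sc c v |m c. m \<in> M}" by blast
next
  fix a x assume "x \<in> {m + sc c v |m c. m \<in> M}"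
  then obtain m1 c1 where "x = m1 + sc c1 v" "m1 \<in> M" by blast
  then have "sc a x = sc a m1 + sc (a * c1) v" "sc a m1 \<in> M"
    using sc_add sc_mult sub_sc[OF assms] by auto
  then show "sc a x \<in> {m + sc c v |m c. m \<in> M}" by blast
qed

lemma lin_sup: "M \<subseteq> lin sc M v"
proof
  fix x assume "x \<in> M" then show "x \<in> lin sc M v" unfolding lin_def by (intro CollectI exI[of _ x] exI[of _ 0]) simp
qed
lemma lin_in: "lsubspace sc M \<Longrightarrow> v \<in> lin sc M v"
  unfolding lin_def using sub0 by (auto intro!: exI[of _ 0] exI[of _ 1])
lemma lin_min: "lsubspace sc F \<Longrightarrow> M \<subseteq> F \<Longrightarrow> v \<in> F \<Longrightarrow> lin sc M v \<subseteq> F"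
  unfolding lin_def using sub_add sub_sc by blast
lemma linE: "w \<in> lin sc M v \<Longrightarrow> (\<And>m c. m \<in> M \<Longrightarrow> w = m + sc c v \<Longrightarrow> P) \<Longrightarrow> P"
  unfolding lin_def by blast
lemma linI: "m \<in> M \<Longrightarrow> m + sc c v \<in> lin sc M v"
  unfolding lin_def by blast

lemma lin_coeff0: assumes "lsubspace sc M" "v \<notin> M" "m \<in> M" "m + sc c v \<in> M" shows "c = 0"
proof (rule ccontr)
  assume c: "c \<noteq> 0"
  have "sc c v \<in> M" using sub_diff[OF assms(1) assms(4) assms(3)] by simp
  then have "sc (inverse c) (sc c v) \<in> M" by (rule sub_sc[OF assms(1)])
  then show False using sc_inv[OF c] assms(2) by simp
qed

lemma lin_exchange: assumes "lsubspace sc M" "w \<in> lin sc M v" "w \<notin> M"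
  shows "v \<in> lin sc M w"
proof -
  obtain m c where m: "m \<in> M" "w = m + sc c v" using assms(2) by (rule linE)
  have c: "c \<noteq> 0" using m assms(3) by auto
  have "v = sc (inverse c) (- m) + sc (inverse c) w"
    using sc_add[of "inverse c" "-m" w] m sc_inv[OF c, of v] by simp
  then show ?thesis using linI[OF sub_sc[OF assms(1) sub_minus[OF assms(1) m(1)]]] by metis
qed

lemma lin_exchange_eq: assumes "lsubspace sc M" "w \<in> lin sc M v" "w \<notin> M"
  shows "lin sc M w = lin sc M v"
  using lin_min[OF lin_sub[OF assms(1)] lin_sup assms(2)]
    lin_min[OF lin_sub[OF assms(1)] lin_sup lin_exchange[OF assms]] by blast

lemma codim1_lin: "codim1 sc M E \<longleftrightarrow> M \<subseteq> E \<and> (\<exists>v\<in>E. v \<notin> M \<and> E = lin sc M v)"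
  unfolding codim1_def lin_def by simp

lemma codim1_sub: "lsubspace sc M \<Longrightarrow> codim1 sc M E \<Longrightarrow> lsubspace sc E"
  unfolding codim1_lin using lin_sub by blast

lemma codim1_intro: "lsubspace sc M \<Longrightarrow> v \<notin> M \<Longrightarrow> codim1 sc M (lin sc M v)"
  unfolding codim1_lin using lin_sup lin_in by blast

lemma CL: assumes "lsubspace sc E" "codim1 sc E N" "lsubspace sc F" "E \<subseteq> F" "F \<subseteq> N" "w \<in> F" "w \<notin> E"
  shows "F = N"
proof -
  obtain v where v: "v \<in> N" "v \<notin> E" "N = lin sc E v" using assms(2) unfolding codim1_lin by blast
  have "lin sc E w = N" using lin_exchange_eq[OF assms(1) _ assms(7)] assms(5,6) v(3) by blast
  moreover have "lin sc E w \<subseteq> F" using lin_min[OF assms(3,4,6)] .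
  ultimately show ?thesis using assms(5) by blast
qed

lemma ssum_sub: assumes "lsubspace sc X" "lsubspace sc Y" shows "lsubspace sc (ssum X Y)"
  unfolding lsubspace_def ssum_def
proof (intro conjI ballI allI)
  show "0 \<in> {x + y |x y. x \<in> X \<and> y \<in> Y}" using sub0[OF assms(1)] sub0[OF assms(2)] by force
next
  fix a b assume "a \<in> {x + y |x y. x \<in> X \<and> y \<in> Y}" "b \<in> {x + y |x y. x \<in> X \<and> y \<in> Y}"
  then obtain x1 y1 x2 y2 where "a = x1 + y1" "b = x2 + y2" "x1 \<in> X" "x2 \<in> X" "y1 \<in> Y" "y2 \<in> Y" by blast
  then have "a + b = (x1 + x2) + (y1 + y2)" "x1 + x2 \<in> X" "y1 + y2 \<in> Y"
    using sub_add assms by (auto simp: algebra_simps)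
  then show "a + b \<in> {x + y |x y. x \<in> X \<and> y \<in> Y}" by blast
next
  fix c a assume "a \<in> {x + y |x y. x \<in> X \<and> y \<in> Y}"
  then obtain x1 y1 where "a = x1 + y1" "x1 \<in> X" "y1 \<in> Y" by blast
  then have "sc c a = sc c x1 + sc c y1" "sc c x1 \<in> X" "sc c y1 \<in> Y"
    using sc_add sub_sc assms by auto
  then show "sc c a \<in> {x + y |x y. x \<in> X \<and> y \<in> Y}" by blast
qed

lemma ssum_sup1: "lsubspace sc Y \<Longrightarrow> X \<subseteq> ssum X Y"
  unfolding ssum_def using sub0 by force
lemma ssum_sup2: "lsubspace sc X \<Longrightarrow> Y \<subseteq> ssum X Y"
  unfolding ssum_def using sub0 by force
lemma ssum_min: "lsubspace sc F \<Longrightarrow> X \<subseteq> F \<Longrightarrow> Y \<subseteq> F \<Longrightarrow> ssum X Y \<subseteq> F"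
  unfolding ssum_def using sub_add by blast
lemma ssum_comm: "ssum X Y = ssum Y X"
  unfolding ssum_def by (auto, metis add.commute, metis add.commute)

lemma adjacent_sym: "adjacent sc X Z \<Longrightarrow> adjacent sc Z X"
  unfolding adjacent_def using ssum_comm[of X Z] by simp

lemma ADJ1: assumes "lsubspace sc X" "lsubspace sc Z" "adjacent sc X Z"
  shows "\<exists>x1. x1 \<in> X \<and> x1 \<notin> Z \<and> ssum X Z = lin sc Z x1"
proof -
  have "codim1 sc Z (ssum X Z)" using assms(3) unfolding adjacent_def by blast
  then obtain v where v: "v \<in> ssum X Z" "v \<notin> Z" "ssum X Z = lin sc Z v" unfolding codim1_lin by blast
  have "\<not> X \<subseteq> Z" using ssum_min[OF assms(2) _ order_refl, of X] v by blast
  then obtain x1 where x1: "x1 \<in> X" "x1 \<notin> Z" by blast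
  have "x1 \<in> lin sc Z v" using x1 ssum_sup1[OF assms(2)] v(3) by blast
  then have "lin sc Z x1 = lin sc Z v" using lin_exchange_eq[OF assms(2)] x1 by blast
  then show ?thesis using x1 v by metis
qed

lemma adj_hyper: assumes "lsubspace sc X" "lsubspace sc Z" "adjacent sc X Z"
  shows "codim1 sc (X \<inter> Z) X"
proof -
  obtain x1 where x1: "x1 \<in> X" "x1 \<notin> Z" "ssum X Z = lin sc Z x1" using ADJ1[OF assms] by blast
  have "X \<subseteq> lin sc (X \<inter> Z) x1"
  proof
    fix x assume x: "x \<in> X"
    then have "x \<in> lin sc Z x1" using x1(3) ssum_sup1[OF assms(2)] by blast
    then obtain z c where zc: "z \<in> Z" "x = z + sc c x1" by (rule linE)
    have "z = x - sc c x1" using zc by simp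
    then have "z \<in> X" using sub_diff[OF assms(1) x sub_sc[OF assms(1) x1(1)]] by simp
    then show "x \<in> lin sc (X \<inter> Z) x1" using zc linI by blast
  qed
  moreover have "lin sc (X \<inter> Z) x1 \<subseteq> X" using lin_min[OF assms(1) _ x1(1)] by blast
  ultimately show ?thesis unfolding codim1_lin using x1 by blast
qed

lemma ZH: assumes "lsubspace sc N" "lsubspace sc S0" "S0 \<subseteq> N" "x \<in> N" "x \<notin> S0"
  shows "\<exists>H. lsubspace sc H \<and> S0 \<subseteq> H \<and> H \<subseteq> N \<and> x \<notin> H \<and> N = lin sc H x"
proof -
  let ?A = "{S. lsubspace sc S \<and> S0 \<subseteq> S \<and> S \<subseteq> N \<and> x \<notin> S}"
  have "\<exists>H\<in>?A. \<forall>X\<in>?A. H \<subseteq> X \<longrightarrow> X = H"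
  proof (rule subset_Zorn_nonempty)
    show "?A \<noteq> {}" using assms by blast
  next
    fix C assume C: "C \<noteq> {}" "subset.chain ?A C"
    have CA: "C \<subseteq> ?A" and ch: "\<forall>S\<in>C. \<forall>T\<in>C. S \<subseteq> T \<or> T \<subseteq> S"
      using C(2) unfolding subset.chain_def by auto
    obtain S1 where S1: "S1 \<in> C" using C(1) by blast
    have "lsubspace sc (\<Union>C)"
      unfolding lsubspace_def
    proof (intro conjI ballI allI)
      show "0 \<in> \<Union>C" using S1 CA sub0 by blast
    next
      fix u v assume "u \<in> \<Union>C" "v \<in> \<Union>C"
      then obtain S T where ST: "S \<in> C" "T \<in> C" "u \<in> S" "v \<in> T" by blast
      then consider "S \<subseteq> T" | "T \<subseteq> S" using ch by blast
      then show "u + v \<in> \<Union>C"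
      proof cases
        case 1 then show ?thesis using ST CA sub_add[of T u v] by blast
      next
        case 2 then show ?thesis using ST CA sub_add[of S u v] by blast
      qed
    next
      fix a u assume "u \<in> \<Union>C"
      then obtain S where "S \<in> C" "u \<in> S" by blast
      then show "sc a u \<in> \<Union>C" using CA sub_sc[of S u a] by blast
    qed
    moreover have "S0 \<subseteq> \<Union>C" using CA S1 by blast
    moreover have "\<Union>C \<subseteq> N" using CA by blast
    moreover have "x \<notin> \<Union>C" using CA by blast
    ultimately show "\<Union>C \<in> ?A" by simp
  qed
  then obtain H where HA: "H \<in> ?A" and max0: "\<forall>X\<in>?A. H \<subseteq> X \<longrightarrow> X = H" by (rule bexE)
  from HA have H: "lsubspace sc H" "S0 \<subseteq> H" "H \<subseteq> N" "x \<notin> H" by simp_all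
  have max: "X = H" if "X \<in> ?A" "H \<subseteq> X" for X using max0 that by blast
  have "N \<subseteq> lin sc H x"
  proof
    fix w assume w: "w \<in> N"
    show "w \<in> lin sc H x"
    proof (rule ccontr)
      assume nw: "w \<notin> lin sc H x"
      have wH: "w \<notin> H" using nw lin_sup by blast
      have "x \<notin> lin sc H w"
      proof
        assume "x \<in> lin sc H w"
        then have "w \<in> lin sc H x" using lin_exchange[OF H(1)] H(4) by blast
        then show False using nw by blast
      qed
      moreover have "lin sc H w \<subseteq> N" using lin_min[OF assms(1) H(3) w] .
      moreover have "S0 \<subseteq> lin sc H w" using H(2) lin_sup by blast
      ultimately have "lin sc H w \<in> ?A" using lin_sub[OF H(1)] by simp
      then have "lin sc H w = H" using max lin_sup by blast
      then show False using lin_in[OF H(1)] wH by blast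
    qed
  qed
  moreover have "lin sc H x \<subseteq> N" using lin_min[OF assms(1) H(3) assms(4)] .
  ultimately show ?thesis using H by blast
qed

definition coef :: "'v set \<Rightarrow> 'v \<Rightarrow> 'v \<Rightarrow> 'k" where
  "coef H a u = (THE c. u - sc c a \<in> H)"

lemma coef_uniq: assumes "lsubspace sc H" "a \<notin> H" "u - sc c a \<in> H" "u - sc d a \<in> H"
  shows "c = d"
proof -
  have "(u - sc d a) - (u - sc c a) \<in> H" using sub_diff[OF assms(1) assms(4,3)] .
  then have "0 + sc (c - d) a \<in> H" by (simp add: sc_diff_left)
  then have "c - d = 0" using lin_coeff0[OF assms(1,2) sub0[OF assms(1)]] by blast
  then show ?thesis by simp
qed

lemma coef_eq: assumes "lsubspace sc H" "a \<notin> H" "u - sc c a \<in> H" shows "coef H a u = c"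
  unfolding coef_def using coef_uniq[OF assms(1,2)] assms(3) by blast

lemma coef_in: assumes "lsubspace sc H" "a \<notin> H" "u \<in> lin sc H a" shows "u - sc (coef H a u) a \<in> H"
proof -
  obtain h c where "h \<in> H" "u = h + sc c a" using assms(3) by (rule linE)
  then have "u - sc c a \<in> H" by simp
  then show ?thesis using coef_eq[OF assms(1,2)] by simp
qed


definition tr :: "'v set \<Rightarrow> 'v \<Rightarrow> 'v \<Rightarrow> 'v \<Rightarrow> 'v" where
  "tr H a b u = u - sc (coef H a u) a + sc (coef H a u) b"

context
  fixes H a b
  assumes Hs: "lsubspace sc H" and aH: "a \<notin> H" and bH: "b \<notin> H" and Ua: "UNIV = lin sc H a"
begin

lemma Ub: "UNIV = lin sc H b"
proof -
  have "b \<in> lin sc H a" using Ua by blast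
  then show ?thesis using lin_exchange_eq[OF Hs _ bH] Ua by blast
qed

lemma cin: "u - sc (coef H a u) a \<in> H"
  using coef_in[OF Hs aH] Ua by blast

lemma coef_add: "coef H a (u + v) = coef H a u + coef H a v"
proof (rule coef_eq[OF Hs aH])
  have eq: "(u + v) - sc (coef H a u + coef H a v) a = (u - sc (coef H a u) a) + (v - sc (coef H a v) a)"
    by (simp add: sc_add_left algebra_simps)
  show "(u + v) - sc (coef H a u + coef H a v) a \<in> H" unfolding eq by (rule sub_add[OF Hs cin cin])
qed

lemma coef_sc: "coef H a (sc k u) = k * coef H a u"
proof (rule coef_eq[OF Hs aH])
  have "sc k u - sc (k * coef H a u) a = sc k (u - sc (coef H a u) a)"
    by (simp add: sc_mult sc_diff)
  then show "sc k u - sc (k * coef H a u) a \<in> H" using sub_sc[OF Hs cin] by simp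
qed

lemma coef_H: "m \<in> H \<Longrightarrow> coef H a m = 0"
  by (rule coef_eq[OF Hs aH]) simp

lemma coef_a: "coef H a a = 1"
  by (rule coef_eq[OF Hs aH]) (simp add: sub0[OF Hs])

lemma tr_add: "tr H a b (u + v) = tr H a b u + tr H a b v"
  unfolding tr_def coef_add by (simp add: sc_add_left algebra_simps)

lemma tr_sc: "tr H a b (sc k u) = sc k (tr H a b u)"
  unfolding tr_def coef_sc by (simp add: sc_mult sc_add sc_diff)

lemma tr_0: "tr H a b 0 = 0"
  using tr_add[of 0 0] by simp

lemma tr_H: "m \<in> H \<Longrightarrow> tr H a b m = m"
  unfolding tr_def using coef_H by simp

lemma tr_a: "tr H a b a = b"
  unfolding tr_def coef_a by simp

lemma coef_tr: "coef H b (tr H a b u) = coef H a u"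
proof (rule coef_eq[OF Hs bH])
  show "tr H a b u - sc (coef H a u) b \<in> H" unfolding tr_def using cin by simp
qed

lemma tr_lin: assumes "M \<subseteq> H" "lsubspace sc M" shows "tr H a b ` lin sc M a = lin sc M b"
proof
  show "tr H a b ` lin sc M a \<subseteq> lin sc M b"
  proof
    fix w assume "w \<in> tr H a b ` lin sc M a"
    then obtain m c where "m \<in> M" "w = tr H a b (m + sc c a)" unfolding lin_def by blast
    then have "w = m + sc c b" "m \<in> M" using tr_add tr_sc tr_H tr_a assms(1) by auto
    then show "w \<in> lin sc M b" using linI by blast
  qed
next
  show "lin sc M b \<subseteq> tr H a b ` lin sc M a"
  proof
    fix w assume "w \<in> lin sc M b"
    then obtain m c where "m \<in> M" "w = m + sc c b" by (rule linE)
    then have "w = tr H a b (m + sc c a)" "m + sc c a \<in> lin sc M a" using tr_add tr_sc tr_H tr_a assms(1) linI by auto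
    then show "w \<in> tr H a b ` lin sc M a" by blast
  qed
qed

end

lemma tr_inv: assumes "lsubspace sc H" "a \<notin> H" "b \<notin> H" "UNIV = lin sc H a"
  shows "tr H b a (tr H a b u) = u"
  using coef_tr[OF assms] unfolding tr_def by (simp add: algebra_simps)

lemma transfer:
  assumes Hs: "lsubspace sc H" and aH: "a \<notin> H" and bH: "b \<notin> H" and Ua: "UNIV = lin sc H a"
    and M: "lsubspace sc M" "M \<subseteq> H" and X: "lin sc M a \<in> GG sc"
  shows "lin sc M b \<in> GG sc"
proof -
  have Ub: "UNIV = lin sc H b" by (rule Ub[OF Hs aH bH Ua])
  note A = Hs aH bH Ua and B = Hs bH aH Ub
  obtain f where f: "\<And>x y. f (x + y) = f x + f y" "\<And>k x. f (sc k x) = sc k (f x)"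
    "range f = lin sc M a" "{v. f v = 0} = lin sc M a"
    using X unfolding GG_def iso_to_quotient_def by blast
  define g where "g = (\<lambda>u. tr H a b (f (tr H b a u)))"
  have g1: "g (x + y) = g x + g y" for x y unfolding g_def using tr_add[OF A] tr_add[OF B] f(1) by simp
  have g2: "g (sc k x) = sc k (g x)" for k x unfolding g_def using tr_sc[OF A] tr_sc[OF B] f(2) by simp
  have ia: "tr H b a (tr H a b u) = u" for u by (rule tr_inv[OF A])
  have ib: "tr H a b (tr H b a u) = u" for u by (rule tr_inv[OF B])
  have g3: "range g = lin sc M b"
  proof
    show "range g \<subseteq> lin sc M b"
    proof
      fix w assume "w \<in> range g"
      then obtain u where "w = tr H a b (f (tr H b a u))" unfolding g_def by blast
      moreover have "f (tr H b a u) \<in> lin sc M a" using f(3) by blast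
      ultimately show "w \<in> lin sc M b" using tr_lin[OF A M(2,1)] by blast
    qed
  next
    show "lin sc M b \<subseteq> range g"
    proof
      fix w assume "w \<in> lin sc M b"
      then obtain z where z: "z \<in> lin sc M a" "w = tr H a b z" using tr_lin[OF A M(2,1)] by blast
      then obtain u where "z = f u" using f(3) by blast
      then have "w = g (tr H a b u)" unfolding g_def using z ia by simp
      then show "w \<in> range g" by blast
    qed
  qed
  have g4: "{v. g v = 0} = lin sc M b"
  proof
    show "{v. g v = 0} \<subseteq> lin sc M b"
    proof
      fix u assume "u \<in> {v. g v = 0}"
      then have "tr H a b (f (tr H b a u)) = 0" unfolding g_def by simp
      then have "f (tr H b a u) = 0" using ia[of "f (tr H b a u)"] tr_0[OF B] by simp
      then have "tr H b a u \<in> lin sc M a" using f(4) by blast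
      then have "tr H a b (tr H b a u) \<in> lin sc M b" using tr_lin[OF A M(2,1)] by blast
      then show "u \<in> lin sc M b" using ib by simp
    qed
  next
    show "lin sc M b \<subseteq> {v. g v = 0}"
    proof
      fix u assume "u \<in> lin sc M b"
      then have "tr H b a u \<in> lin sc M a" using tr_lin[OF B M(2,1)] by blast
      then have "f (tr H b a u) = 0" using f(4) by blast
      then show "u \<in> {v. g v = 0}" unfolding g_def using tr_0[OF A] by simp
    qed
  qed
  show ?thesis unfolding GG_def iso_to_quotient_def using lin_sub[OF M(1)] g1 g2 g3 g4 by blast
qed

lemma starGG: assumes X: "X \<in> GG sc" and M: "lsubspace sc M" and MX: "codim1 sc M X" and ME: "codim1 sc M E"
  shows "E \<in> GG sc"
proof -
  obtain x where x: "x \<in> X" "x \<notin> M" "X = lin sc M x" using MX unfolding codim1_lin by blast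
  obtain v where v: "v \<in> E" "v \<notin> M" "E = lin sc M v" using ME unfolding codim1_lin by blast
  show ?thesis
  proof (cases "v \<in> X")
    case True
    then have "E = X" using lin_exchange_eq[OF M _ v(2)] x(3) v(3) by simp
    then show ?thesis using X by simp
  next
    case False
    let ?S0 = "lin sc M (v - x)"
    have xS0: "x \<notin> ?S0"
    proof
      assume "x \<in> ?S0"
      then have "v - x \<in> lin sc M x" using lin_exchange[OF M _ x(2)] by blast
      then have "(v - x) + x \<in> lin sc M x" using sub_add[OF lin_sub[OF M] _ lin_in[OF M]] by blast
      then show False using False x(3) by simp
    qed
    obtain H where H: "lsubspace sc H" "?S0 \<subseteq> H" "x \<notin> H" "UNIV = lin sc H x"
      using ZH[OF sub_UNIV lin_sub[OF M] _ _ xS0] by blast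
    have vx: "v - x \<in> H" using H(2) lin_in[OF M] by blast
    have vH: "v \<notin> H"
    proof
      assume "v \<in> H"
      then have "v - (v - x) \<in> H" using sub_diff[OF H(1) _ vx] by blast
      then show False using H(3) by simp
    qed
    have MH: "M \<subseteq> H" using H(2) lin_sup by blast
    show ?thesis using transfer[OF H(1) H(3) vH H(4) M MH] X x(3) v(3) by simp
  qed
qed

lemma ring3a:
  fixes a1 a2 a3 b1 b2 b3 :: 'k
  assumes a1: "a1 \<noteq> 0"
  shows "\<exists>\<alpha> \<beta> \<gamma>. \<not> (\<alpha> = 0 \<and> \<beta> = 0 \<and> \<gamma> = 0) \<and> \<alpha> * a1 + \<beta> * a2 + \<gamma> * a3 = 0 \<and> \<alpha> * b1 + \<beta> * b2 + \<gamma> * b3 = 0"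
proof -
  define d2 where "d2 = b2 - a2 * inverse a1 * b1"
  define d3 where "d3 = b3 - a3 * inverse a1 * b1"
  show ?thesis
  proof (cases "d2 = 0")
    case True
    have "(- (a2 * inverse a1)) * a1 + 1 * a2 + 0 * a3 = 0"
      using a1 by (simp add: mult.assoc)
    moreover have "(- (a2 * inverse a1)) * b1 + 1 * b2 + 0 * b3 = 0"
      using True unfolding d2_def by (simp add: algebra_simps)
    ultimately show ?thesis by (metis one_neq_zero)
  next
    case False
    define \<beta> where "\<beta> = - (d3 * inverse d2)"
    define \<alpha> where "\<alpha> = - (\<beta> * a2 + a3) * inverse a1"
    have e1: "\<alpha> * a1 + \<beta> * a2 + 1 * a3 = 0"
      unfolding \<alpha>_def using a1 by (simp add: mult.assoc)
    have "\<alpha> * b1 + \<beta> * b2 + 1 * b3 = \<beta> * d2 + d3"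
      unfolding \<alpha>_def d2_def d3_def by (simp add: algebra_simps)
    also have "\<dots> = 0" unfolding \<beta>_def using False by (simp add: mult.assoc)
    finally show ?thesis using e1 by (metis one_neq_zero)
  qed
qed

lemma ring3:
  fixes a1 a2 a3 b1 b2 b3 :: 'k
  shows "\<exists>\<alpha> \<beta> \<gamma>. \<not> (\<alpha> = 0 \<and> \<beta> = 0 \<and> \<gamma> = 0) \<and> \<alpha> * a1 + \<beta> * a2 + \<gamma> * a3 = 0 \<and> \<alpha> * b1 + \<beta> * b2 + \<gamma> * b3 = 0"
proof (cases "a1 = 0")
  case False then show ?thesis by (rule ring3a)
next
  case True
  show ?thesis
  proof (cases "b1 = 0")
    case False
    obtain \<alpha> \<beta> \<gamma> where "\<not> (\<alpha> = 0 \<and> \<beta> = 0 \<and> \<gamma> = 0)"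
      "\<alpha> * b1 + \<beta> * b2 + \<gamma> * b3 = 0" "\<alpha> * a1 + \<beta> * a2 + \<gamma> * a3 = 0"
      using ring3a[OF False, of b2 b3 a1 a2 a3] by blast
    then show ?thesis by blast
  next
    case b: True
    show ?thesis using True b by (intro exI[of _ 1] exI[of _ 0]) simp
  qed
qed

lemma D2: assumes "\<forall>w. \<exists>\<alpha> \<beta>. w = sc \<alpha> p + sc \<beta> q" shows "\<not> dim_gt_2 sc"
proof
  assume "dim_gt_2 sc"
  then obtain u v w where ind: "\<And>a b c. sc a u + sc b v + sc c w = 0 \<Longrightarrow> a = 0 \<and> b = 0 \<and> c = 0"
    unfolding dim_gt_2_def by blast
  obtain a1 b1 where u: "u = sc a1 p + sc b1 q" using assms by blast
  obtain a2 b2 where v: "v = sc a2 p + sc b2 q" using assms by blast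
  obtain a3 b3 where w: "w = sc a3 p + sc b3 q" using assms by blast
  obtain \<alpha> \<beta> \<gamma> where nz: "\<not> (\<alpha> = 0 \<and> \<beta> = 0 \<and> \<gamma> = 0)"
    and e1: "\<alpha> * a1 + \<beta> * a2 + \<gamma> * a3 = 0" and e2: "\<alpha> * b1 + \<beta> * b2 + \<gamma> * b3 = 0"
    using ring3 by blast
  have "sc \<alpha> u + sc \<beta> v + sc \<gamma> w = sc (\<alpha> * a1 + \<beta> * a2 + \<gamma> * a3) p + sc (\<alpha> * b1 + \<beta> * b2 + \<gamma> * b3) q"
    unfolding u v w by (simp add: sc_add sc_add_left sc_mult algebra_simps)
  also have "\<dots> = 0" using e1 e2 by simp
  finally show False using ind nz by blast
qed

lemma GG_sub: "X \<in> GG sc \<Longrightarrow> lsubspace sc X"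
  unfolding GG_def by blast

lemma G1: assumes X: "X \<in> GG sc" and Xp: "X \<subseteq> {sc c p | c. True}" shows "\<not> dim_gt_2 sc"
proof -
  obtain f where f: "\<And>x y. f (x + y) = f x + f y" "\<And>k x. f (sc k x) = sc k (f x)"
    "range f = X" "{v. f v = 0} = X"
    using X unfolding GG_def iso_to_quotient_def by blast
  have Xs: "lsubspace sc X" using X GG_sub by blast
  show ?thesis
  proof (cases "p \<in> X")
    case True
    then have "p \<in> range f" using f(3) by simp
    then obtain u where u: "f u = p" by blast
    have "\<forall>w. \<exists>\<alpha> \<beta>. w = sc \<alpha> u + sc \<beta> p"
    proof
      fix w
      have "f w \<in> X" using f(3) by blast
      then obtain c where c: "f w = sc c p" using Xp by blast
      have "f (w - sc c u) = 0" using f(1)[of "w - sc c u" "sc c u"] f(2)[of c u] c u by simp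
      then have "w - sc c u \<in> X" using f(4) by blast
      then obtain d where "w - sc c u = sc d p" using Xp by blast
      then have "w = sc c u + sc d p" by (simp add: algebra_simps)
      then show "\<exists>\<alpha> \<beta>. w = sc \<alpha> u + sc \<beta> p" by blast
    qed
    then show ?thesis by (rule D2)
  next
    case False
    have "X \<subseteq> {0}"
    proof
      fix x assume "x \<in> X"
      then obtain c where c: "x = sc c p" using Xp by blast
      show "x \<in> {0}"
      proof (cases "c = 0")
        case False
        then have "p = sc (inverse c) x" using c sc_inv by simp
        then have "p \<in> X" using sub_sc[OF Xs \<open>x \<in> X\<close>] by simp
        then show ?thesis using \<open>p \<notin> X\<close> by blast
      qed (simp add: c)
    qed
    have "\<forall>w::'v. w = 0"
    proof
      fix w
      have "f w \<in> X" using f(3) by blast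
      then have "f w = 0" using \<open>X \<subseteq> {0}\<close> by blast
      then have "w \<in> X" using f(4) by blast
      then show "w = 0" using \<open>X \<subseteq> {0}\<close> by blast
    qed
    then have "\<forall>w. \<exists>\<alpha> \<beta>. w = sc \<alpha> p + sc \<beta> p" by (metis add.right_neutral sc_zero_left)
    then show ?thesis by (rule D2)
  qed
qed

lemma G_nz: assumes "X \<in> GG sc" "dim_gt_2 sc" shows "\<exists>x\<in>X. x \<noteq> 0"
proof (rule ccontr)
  assume "\<not> (\<exists>x\<in>X. x \<noteq> 0)"
  then have "X \<subseteq> {sc c 0 | c. True}" by auto
  then show False using G1[OF assms(1)] assms(2) by blast
qed

lemma G_nU: assumes "X \<in> GG sc" "dim_gt_2 sc" shows "\<exists>v. v \<notin> X"
proof (rule ccontr)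
  assume "\<not> (\<exists>v. v \<notin> X)"
  then have XU: "X = UNIV" by blast
  obtain f where f: "range f = X" "{v. f v = 0} = X"
    using assms(1) unfolding GG_def iso_to_quotient_def by blast
  have "\<forall>v. f v = 0" using f(2) XU by (metis UNIV_I mem_Collect_eq)
  then have "range f \<subseteq> {0}" by auto
  then have "X \<subseteq> {0}" using f(1) by simp
  then show False using G_nz[OF assms] by blast
qed

lemma G3: assumes X: "X \<in> GG sc" and U: "UNIV = lin sc X m" shows "\<not> dim_gt_2 sc"
proof -
  obtain f where f: "\<And>x y. f (x + y) = f x + f y" "\<And>k x. f (sc k x) = sc k (f x)"
    "range f = X" "{v. f v = 0} = X"
    using X unfolding GG_def iso_to_quotient_def by blast
  have "X \<subseteq> {sc c (f m) | c. True}"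
  proof
    fix y assume "y \<in> X"
    then obtain w where yw: "y = f w" using f(3) by blast
    have "w \<in> lin sc X m" using U by blast
    then obtain x c where xc: "x \<in> X" "w = x + sc c m" by (rule linE)
    have "f x = 0" using f(4) xc(1) by blast
    then have "y = sc c (f m)" using f(1,2) yw xc(2) by simp
    then show "y \<in> {sc c (f m) | c. True}" by blast
  qed
  then show ?thesis by (rule G1[OF X])
qed

lemma adj_not_sub: assumes "lsubspace sc Z" "adjacent sc X Z" shows "\<not> X \<subseteq> Z"
proof
  assume "X \<subseteq> Z"
  then have "ssum X Z \<subseteq> Z" using ssum_min[OF assms(1)] by blast
  moreover have "codim1 sc Z (ssum X Z)" using assms(2) unfolding adjacent_def by blast
  ultimately show False unfolding codim1_lin by blast
qed

lemma adj_span: assumes "lsubspace sc Y" "lsubspace sc E" "adjacent sc Y E" "m \<in> E" "m \<notin> Y"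
  shows "ssum Y E = lin sc Y m"
proof -
  have "codim1 sc Y (ssum Y E)" using assms(3) unfolding adjacent_def by blast
  then obtain w where w: "w \<notin> Y" "ssum Y E = lin sc Y w" unfolding codim1_lin by blast
  have "m \<in> lin sc Y w" using w(2) ssum_sup2[OF assms(1)] assms(4) by blast
  then show ?thesis using lin_exchange_eq[OF assms(1) _ assms(5)] w(2) by simp
qed

lemma star_adj1: assumes M: "lsubspace sc M" and E1: "codim1 sc M E1" and E2: "codim1 sc M E2" and ne: "E1 \<noteq> E2"
  shows "codim1 sc E1 (ssum E1 E2)"
proof -
  obtain v1 where v1: "v1 \<notin> M" "E1 = lin sc M v1" using E1 unfolding codim1_lin by blast
  obtain v2 where v2: "v2 \<notin> M" "E2 = lin sc M v2" using E2 unfolding codim1_lin by blast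
  have s1: "lsubspace sc E1" "lsubspace sc E2" using v1 v2 lin_sub[OF M] by auto
  have nv: "v2 \<notin> E1"
  proof
    assume "v2 \<in> E1"
    then have "lin sc M v2 = lin sc M v1" using lin_exchange_eq[OF M _ v2(1)] v1(2) by simp
    then show False using ne v1 v2 by simp
  qed
  have "ssum E1 E2 = lin sc E1 v2"
  proof
    have "M \<subseteq> lin sc E1 v2" using E1 lin_sup unfolding codim1_def by blast
    then have "E2 \<subseteq> lin sc E1 v2" using v2(2) lin_min[OF lin_sub[OF s1(1)] _ lin_in[OF s1(1)]] by blast
    then show "ssum E1 E2 \<subseteq> lin sc E1 v2" using ssum_min[OF lin_sub[OF s1(1)] lin_sup] by blast
  next
    have "v2 \<in> ssum E1 E2" using ssum_sup2[OF s1(1)] lin_in[OF M] v2(2) by blast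
    then show "lin sc E1 v2 \<subseteq> ssum E1 E2" using lin_min[OF ssum_sub[OF s1] ssum_sup1[OF s1(2)]] by blast
  qed
  then show ?thesis using codim1_intro[OF s1(1) nv] by simp
qed

lemma star_adj: assumes "lsubspace sc M" "codim1 sc M E1" "codim1 sc M E2" "E1 \<noteq> E2"
  shows "adjacent sc E1 E2"
  unfolding adjacent_def using star_adj1[OF assms] star_adj1[OF assms(1,3,2)] assms(4) ssum_comm[of E1 E2] by metis

lemma top_adj1: assumes E1: "lsubspace sc E1" "codim1 sc E1 N" and E2: "lsubspace sc E2" "codim1 sc E2 N" and ne: "E1 \<noteq> E2"
  shows "codim1 sc E1 (ssum E1 E2)"
proof -
  have N: "lsubspace sc N" using codim1_sub[OF E1] .
  have "\<not> E2 \<subseteq> E1"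
  proof
    assume sub: "E2 \<subseteq> E1"
    then obtain w where "w \<in> E1" "w \<notin> E2" using ne by blast
    then have "E1 = N" using CL[OF E2(1) E2(2) E1(1) sub] E1(2) unfolding codim1_def by blast
    then show False using E1(2) unfolding codim1_def by blast
  qed
  then obtain w where w: "w \<in> E2" "w \<notin> E1" by blast
  have "ssum E1 E2 \<subseteq> N" using ssum_min[OF N] E1(2) E2(2) unfolding codim1_def by blast
  then have "ssum E1 E2 = N" using CL[OF E1(1) E1(2) ssum_sub[OF E1(1) E2(1)] ssum_sup1[OF E2(1)] _ _ w(2)]
      ssum_sup2[OF E1(1)] w(1) by blast
  then show ?thesis using E1(2) by simp
qed

lemma top_adj: assumes "lsubspace sc E1" "codim1 sc E1 N" "lsubspace sc E2" "codim1 sc E2 N" "E1 \<noteq> E2"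
  shows "adjacent sc E1 E2"
  unfolding adjacent_def using top_adj1[OF assms] top_adj1[OF assms(3,4,1,2)] assms(5) ssum_comm[of E1 E2] by metis

lemma nbr: assumes M: "lsubspace sc M" and X: "lsubspace sc X" and Z: "lsubspace sc Z"
  and MX: "codim1 sc M X" and MZ: "M \<subseteq> Z" and adj: "adjacent sc X Z"
  shows "codim1 sc M Z"
proof -
  have h: "codim1 sc (Z \<inter> X) Z" using adj_hyper[OF Z X adjacent_sym[OF adj]] .
  have nX: "\<not> X \<subseteq> Z" using adj_not_sub[OF Z adj] .
  have "Z \<inter> X = M"
  proof (rule ccontr)
    assume "Z \<inter> X \<noteq> M"
    moreover have "M \<subseteq> Z \<inter> X" using MZ MX unfolding codim1_def by blast
    ultimately obtain w where "w \<in> Z \<inter> X" "w \<notin> M" by blast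
    then have "Z \<inter> X = X" using CL[OF M MX sub_Int[OF Z X] \<open>M \<subseteq> Z \<inter> X\<close>] by blast
    then show False using nX by blast
  qed
  then show ?thesis using h by simp
qed

lemma nbr2: assumes X: "lsubspace sc X" and Z: "lsubspace sc Z" and XN: "codim1 sc X N"
  and ZN: "Z \<subseteq> N" and adj: "adjacent sc X Z"
  shows "codim1 sc Z N"
proof -
  have N: "lsubspace sc N" using codim1_sub[OF X XN] .
  obtain w where w: "w \<in> Z" "w \<notin> X" using adj_not_sub[OF X adjacent_sym[OF adj]] by blast
  have "ssum X Z \<subseteq> N" using ssum_min[OF N] XN ZN unfolding codim1_def by blast
  then have "ssum X Z = N" using CL[OF X XN ssum_sub[OF X Z] ssum_sup1[OF Z] _ _ w(2)] ssum_sup2[OF X] w(1) by blast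
  moreover have "codim1 sc Z (ssum X Z)" using adj unfolding adjacent_def by blast
  ultimately show ?thesis by simp
qed

lemma key: assumes X: "lsubspace sc X" and Y: "lsubspace sc Y" and Z: "lsubspace sc Z"
  and XY: "adjacent sc X Y" and XZ: "adjacent sc X Z" and YZ: "adjacent sc Y Z"
  shows "X \<inter> Y \<subseteq> Z \<or> Z \<subseteq> ssum X Y"
proof (rule ccontr)
  assume "\<not> (X \<inter> Y \<subseteq> Z \<or> Z \<subseteq> ssum X Y)"
  then obtain m z where m: "m \<in> X" "m \<in> Y" "m \<notin> Z" and z: "z \<in> Z" "z \<notin> ssum X Y" by blast
  let ?B = "Y \<inter> Z"
  have Bs: "lsubspace sc ?B" using sub_Int[OF Y Z] .
  have hB: "codim1 sc ?B Y" using adj_hyper[OF Y Z YZ] .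
  have "\<not> ?B \<subseteq> X"
  proof
    assume BX: "?B \<subseteq> X"
    obtain y1 where y1: "y1 \<in> Y" "y1 \<notin> ?B" "Y = lin sc ?B y1" using hB unfolding codim1_lin by blast
    have mB: "m \<notin> ?B" using m by blast
    have "m \<in> lin sc ?B y1" using m y1(3) by blast
    then have "y1 \<in> lin sc ?B m" using lin_exchange[OF Bs _ mB] by blast
    moreover have "lin sc ?B m \<subseteq> X" using lin_min[OF X BX m(1)] .
    ultimately have "y1 \<in> X" by blast
    then have "Y \<subseteq> X" using y1(3) lin_min[OF X BX] by blast
    then show False using adj_not_sub[OF X adjacent_sym[OF XY]] by blast
  qed
  then obtain b where b: "b \<in> Y" "b \<in> Z" "b \<notin> X" by blast
  have "ssum X Z = lin sc X b" using adj_span[OF X Z XZ b(2,3)] .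
  moreover have "z \<in> ssum X Z" using ssum_sup2[OF X] z(1) by blast
  moreover have "lin sc X b \<subseteq> ssum X Y"
    using lin_min[OF ssum_sub[OF X Y] ssum_sup1[OF Y]] ssum_sup2[OF X] b(1) by blast
  ultimately show False using z(2) by blast
qed

lemma mixed: assumes X: "lsubspace sc X" and Y: "lsubspace sc Y" and Z: "lsubspace sc Z" and Z': "lsubspace sc Z'"
  and XY: "adjacent sc X Y" and XZ: "adjacent sc X Z" and XZ': "adjacent sc X Z'" and ZZ': "adjacent sc Z Z'"
  and ZN: "Z \<subseteq> ssum X Y" and MZ: "\<not> X \<inter> Y \<subseteq> Z" and MZ': "X \<inter> Y \<subseteq> Z'" and Z'N: "\<not> Z' \<subseteq> ssum X Y"
  shows False
proof -
  let ?M = "X \<inter> Y" and ?N = "ssum X Y"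
  have Ms: "lsubspace sc ?M" using sub_Int[OF X Y] .
  have Ns: "lsubspace sc ?N" using ssum_sub[OF X Y] .
  have MX: "codim1 sc ?M X" using adj_hyper[OF X Y XY] .
  have XN: "codim1 sc X ?N" using XY unfolding adjacent_def by blast
  have MN: "?M \<subseteq> ?N" using ssum_sup1[OF Y] by blast
  have cZ': "codim1 sc ?M Z'" using nbr[OF Ms X Z' MX MZ' XZ'] .
  obtain z' where z': "z' \<in> Z'" "z' \<notin> ?N" using Z'N by blast
  have z'M: "z' \<notin> ?M" using z' MN by blast
  have Z'eq: "Z' = lin sc ?M z'"
  proof -
    obtain v where v: "v \<notin> ?M" "Z' = lin sc ?M v" using cZ' unfolding codim1_lin by blast
    then show ?thesis using lin_exchange_eq[OF Ms _ z'M] z'(1) by simp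
  qed
  obtain u where u: "u \<in> Z" "u \<notin> Z'" "ssum Z Z' = lin sc Z' u" using ADJ1[OF Z Z' ZZ'] by blast
  have uN: "u \<in> ?N" using u(1) ZN by blast
  have ZMu: "Z \<subseteq> lin sc ?M u"
  proof
    fix x assume x: "x \<in> Z"
    then have "x \<in> lin sc Z' u" using u(3) ssum_sup1[OF Z'] by blast
    then obtain y b where yb: "y \<in> Z'" "x = y + sc b u" by (rule linE)
    obtain m a where ma: "m \<in> ?M" "y = m + sc a z'" using yb(1) Z'eq by (metis linE)
    have "sc a z' = x - m - sc b u" using yb(2) ma(2) by (simp add: algebra_simps)
    moreover have "x - m - sc b u \<in> ?N"
      using sub_diff[OF Ns sub_diff[OF Ns _ _] sub_sc[OF Ns uN]] x ZN ma(1) MN by blast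
    ultimately have "0 + sc a z' \<in> ?N" by simp
    then have "a = 0" using lin_coeff0[OF Ns z'(2) sub0[OF Ns]] by blast
    then have "x = m + sc b u" using yb(2) ma(2) by simp
    then show "x \<in> lin sc ?M u" using linI[OF ma(1)] by simp
  qed
  obtain m where m: "m \<in> ?M" "m \<notin> Z" using MZ by blast
  have cZ: "codim1 sc Z ?N" using nbr2[OF X Z XN ZN XZ] .
  have "lin sc ?M u \<subseteq> ?N" using lin_min[OF Ns MN uN] .
  then have Neq: "lin sc ?M u = ?N"
    using CL[OF Z cZ lin_sub[OF Ms] ZMu _ _ m(2)] lin_sup m(1) by blast
  obtain x where x: "x \<in> X" "x \<notin> ?M" "X = lin sc ?M x" using MX unfolding codim1_lin by blast
  have "x \<in> lin sc ?M u" using Neq ssum_sup1[OF Y] x(1) by blast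
  then have "lin sc ?M x = lin sc ?M u" using lin_exchange_eq[OF Ms _ x(2)] by blast
  then have "X = ?N" using x(3) Neq by simp
  then show False using XN unfolding codim1_def by blast
qed

lemma topGG: assumes N: "lsubspace sc N" and X: "X \<in> GG sc" and XN: "codim1 sc X N" and E: "E \<in> topset sc N"
  shows "E \<in> GG sc"
proof (cases "E = X")
  case True then show ?thesis using X by simp
next
  case False
  have Xs: "lsubspace sc X" using GG_sub[OF X] .
  have Es: "lsubspace sc E" "codim1 sc E N" using E unfolding topset_def by auto
  have adj: "adjacent sc X E" using top_adj[OF Xs XN Es] False by metis
  have h1: "codim1 sc (X \<inter> E) X" using adj_hyper[OF Xs Es(1) adj] .
  have h2: "codim1 sc (E \<inter> X) E" using adj_hyper[OF Es(1) Xs adjacent_sym[OF adj]] .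
  have h2': "codim1 sc (X \<inter> E) E" using h2 by (simp add: Int_commute)
  show ?thesis using starGG[OF X sub_Int[OF Xs Es(1)] h1 h2'] .
qed

lemma star_max: assumes M: "lsubspace sc M" and X: "X \<in> GG sc" and MX: "codim1 sc M X" and d: "dim_gt_2 sc"
  and Y: "Y \<in> GG sc" and adjY: "\<And>E. E \<in> star sc M \<Longrightarrow> Y \<noteq> E \<Longrightarrow> adjacent sc Y E"
  shows "Y \<in> star sc M"
proof (rule ccontr)
  assume nY: "Y \<notin> star sc M"
  have Ys: "lsubspace sc Y" using GG_sub[OF Y] .
  have Xs: "lsubspace sc X" using GG_sub[OF X] .
  have XS: "X \<in> star sc M" using Xs MX unfolding star_def by blast
  have adjX: "adjacent sc Y X" using adjY[OF XS] nY XS by blast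
  show False
  proof (cases "M \<subseteq> Y")
    case True
    have "codim1 sc M Y" using nbr[OF M Xs Ys MX True adjacent_sym[OF adjX]] .
    then show False using nY Ys unfolding star_def by blast
  next
    case False
    then obtain m where m: "m \<in> M" "m \<notin> Y" by blast
    have mX: "m \<in> X" using m MX unfolding codim1_def by blast
    have "UNIV \<subseteq> lin sc Y m"
    proof
      fix v :: 'v
      show "v \<in> lin sc Y m"
      proof (cases "v \<in> M")
        case True
        then have "v \<in> ssum Y X" using MX ssum_sup2[OF Ys] unfolding codim1_def by blast
        then show ?thesis using adj_span[OF Ys Xs adjX mX m(2)] by simp
      next
        case False
        let ?E = "lin sc M v"
        have ES: "?E \<in> star sc M" using codim1_intro[OF M False] lin_sub[OF M] unfolding star_def by blast
        have adjE: "adjacent sc Y ?E" using adjY[OF ES] nY ES by blast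
        have "m \<in> ?E" using lin_sup m(1) by blast
        then have "ssum Y ?E = lin sc Y m" using adj_span[OF Ys lin_sub[OF M] adjE _ m(2)] by blast
        moreover have "v \<in> ssum Y ?E" using ssum_sup2[OF Ys] lin_in[OF M] by blast
        ultimately show ?thesis by simp
      qed
    qed
    then have "UNIV = lin sc Y m" by blast
    then show False using G3[OF Y] d by blast
  qed
qed

lemma top_max: assumes N: "lsubspace sc N" and X: "X \<in> GG sc" and XN: "codim1 sc X N" and d: "dim_gt_2 sc"
  and Y: "Y \<in> GG sc" and adjY: "\<And>E. E \<in> topset sc N \<Longrightarrow> Y \<noteq> E \<Longrightarrow> adjacent sc Y E"
  shows "Y \<in> topset sc N"
proof (rule ccontr)
  assume nY: "Y \<notin> topset sc N"
  have Ys: "lsubspace sc Y" using GG_sub[OF Y] .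
  have Xs: "lsubspace sc X" using GG_sub[OF X] .
  have XT: "X \<in> topset sc N" using Xs XN unfolding topset_def by blast
  have adjX: "adjacent sc Y X" using adjY[OF XT] nY XT by blast
  show False
  proof (cases "Y \<subseteq> N")
    case True
    have "codim1 sc Y N" using nbr2[OF Xs Ys XN True adjacent_sym[OF adjX]] .
    then show False using nY Ys unfolding topset_def by blast
  next
    case False
    then obtain y where y: "y \<in> Y" "y \<notin> N" by blast
    have WE: "Y \<inter> N \<subseteq> E" if ET: "E \<in> topset sc N" for E
    proof
      fix z assume z: "z \<in> Y \<inter> N"
      have Es: "lsubspace sc E" "codim1 sc E N" using ET unfolding topset_def by auto
      have EN: "E \<subseteq> N" using Es(2) unfolding codim1_def by blast
      have adjE: "adjacent sc Y E" using adjY[OF ET] nY ET by blast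
      have yE: "y \<notin> E" using y EN by blast
      have "ssum Y E = lin sc E y" using adj_span[OF Es(1) Ys adjacent_sym[OF adjE] y(1) yE] ssum_comm[of Y E] by simp
      moreover have "z \<in> ssum Y E" using z ssum_sup1[OF Es(1)] by blast
      ultimately have "z \<in> lin sc E y" by simp
      then obtain e c where ec: "e \<in> E" "z = e + sc c y" by (rule linE)
      have "0 + sc c y = z - e" using ec by simp
      moreover have "z - e \<in> N" using sub_diff[OF N] z ec(1) EN by blast
      ultimately have "c = 0" using lin_coeff0[OF N y(2) sub0[OF N]] by metis
      then show "z \<in> E" using ec by simp
    qed
    show False
    proof (cases "\<exists>w\<in>Y \<inter> N. w \<noteq> 0")
      case True
      then obtain w where w: "w \<in> Y \<inter> N" "w \<noteq> 0" by blast
      have "w \<notin> {0}" using w by simp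
      then obtain H where H: "lsubspace sc H" "H \<subseteq> N" "w \<notin> H" "N = lin sc H w"
        using ZH[OF N sub_zero _ _, of w] w(1) sub0[OF N] by blast
      have "codim1 sc H N" using H codim1_intro[OF H(1) H(3)] by simp
      then have "H \<in> topset sc N" using H(1) unfolding topset_def by blast
      then show False using WE w(1) H(3) by blast
    next
      case False
      have "Y \<subseteq> {sc c y | c. True}"
      proof
        fix z assume z: "z \<in> Y"
        have "ssum Y X = lin sc X y"
          using adj_span[OF Xs Ys adjacent_sym[OF adjX] y(1)] y(2) XN ssum_comm[of Y X]
          unfolding codim1_def by blast
        then have "z \<in> lin sc X y" using z ssum_sup1[OF Xs] by blast
        then obtain e c where ec: "e \<in> X" "z = e + sc c y" by (rule linE)
        have "e = z - sc c y" using ec by simp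
        then have "e \<in> Y" using sub_diff[OF Ys z sub_sc[OF Ys y(1)]] by simp
        moreover have "e \<in> N" using ec(1) XN unfolding codim1_def by blast
        ultimately have "e = 0" using False by blast
        then have "z = sc c y" using ec by simp
        then show "z \<in> {sc c y | c. True}" by blast
      qed
      then show False using G1[OF Y] d by blast
    qed
  qed
qed

lemma star_clique: assumes "star_base sc M" shows "adj_clique sc (star sc M)"
proof -
  obtain X where M: "lsubspace sc M" and X: "X \<in> GG sc" "codim1 sc M X" using assms unfolding star_base_def by blast
  have "star sc M \<subseteq> GG sc" using starGG[OF X(1) M X(2)] unfolding star_def by blast
  moreover have "\<forall>E1\<in>star sc M. \<forall>E2\<in>star sc M. E1 \<noteq> E2 \<longrightarrow> adjacent sc E1 E2"
    using star_adj[OF M] unfolding star_def by blast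
  ultimately show ?thesis unfolding adj_clique_def by blast
qed

lemma top_clique: assumes "top_base sc N" shows "adj_clique sc (topset sc N)"
proof -
  obtain X where N: "lsubspace sc N" and X: "X \<in> GG sc" "codim1 sc X N" using assms unfolding top_base_def by blast
  have "topset sc N \<subseteq> GG sc" using topGG[OF N X] by blast
  moreover have "\<forall>E1\<in>topset sc N. \<forall>E2\<in>topset sc N. E1 \<noteq> E2 \<longrightarrow> adjacent sc E1 E2"
    using top_adj unfolding topset_def by blast
  ultimately show ?thesis unfolding adj_clique_def by blast
qed

lemma star_maxc: assumes "star_base sc M" "dim_gt_2 sc" shows "max_adj_clique sc (star sc M)"
proof -
  obtain X where M: "lsubspace sc M" and X: "X \<in> GG sc" "codim1 sc M X" using assms unfolding star_base_def by blast
  have "D = star sc M" if D: "adj_clique sc D" "star sc M \<subseteq> D" for D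
  proof
    show "D \<subseteq> star sc M"
    proof
      fix Y assume Y: "Y \<in> D"
      have YG: "Y \<in> GG sc" using D(1) Y unfolding adj_clique_def by blast
      have "\<And>E. E \<in> star sc M \<Longrightarrow> Y \<noteq> E \<Longrightarrow> adjacent sc Y E"
        using D Y unfolding adj_clique_def by blast
      then show "Y \<in> star sc M" using star_max[OF M X assms(2) YG] by blast
    qed
  qed (rule D(2))
  then show ?thesis unfolding max_adj_clique_def using star_clique[OF assms(1)] by blast
qed

lemma top_maxc: assumes "top_base sc N" "dim_gt_2 sc" shows "max_adj_clique sc (topset sc N)"
proof -
  obtain X where N: "lsubspace sc N" and X: "X \<in> GG sc" "codim1 sc X N" using assms unfolding top_base_def by blast
  have "D = topset sc N" if D: "adj_clique sc D" "topset sc N \<subseteq> D" for D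
  proof
    show "D \<subseteq> topset sc N"
    proof
      fix Y assume Y: "Y \<in> D"
      have YG: "Y \<in> GG sc" using D(1) Y unfolding adj_clique_def by blast
      have "\<And>E. E \<in> topset sc N \<Longrightarrow> Y \<noteq> E \<Longrightarrow> adjacent sc Y E"
        using D Y unfolding adj_clique_def by blast
      then show "Y \<in> topset sc N" using top_max[OF N X assms(2) YG] by blast
    qed
  qed (rule D(2))
  then show ?thesis unfolding max_adj_clique_def using top_clique[OF assms(1)] by blast
qed

lemma maxc_cases: assumes d: "dim_gt_2 sc" and ne: "GG sc \<noteq> {}" and C: "max_adj_clique sc C"
  shows "(\<exists>M. star_base sc M \<and> C = star sc M) \<or> (\<exists>N. top_base sc N \<and> C = topset sc N)"
proof -
  have Cc: "adj_clique sc C" and Cm: "\<And>D. adj_clique sc D \<Longrightarrow> C \<subseteq> D \<Longrightarrow> D = C"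
    using C unfolding max_adj_clique_def by blast+
  have CG: "C \<subseteq> GG sc" and Cadj: "\<And>X Y. X \<in> C \<Longrightarrow> Y \<in> C \<Longrightarrow> X \<noteq> Y \<Longrightarrow> adjacent sc X Y"
    using Cc unfolding adj_clique_def by blast+
  obtain X where XC: "X \<in> C"
  proof (cases "C = {}")
    case True
    obtain X0 where "X0 \<in> GG sc" using ne by blast
    then have "adj_clique sc {X0}" unfolding adj_clique_def by blast
    then have "{X0} = C" using Cm True by blast
    then show ?thesis using True by blast
  next
    case False then show ?thesis using that by blast
  qed
  have XG: "X \<in> GG sc" using XC CG by blast
  have Xs: "lsubspace sc X" using GG_sub[OF XG] .
  obtain Y where YC: "Y \<in> C" and XY: "X \<noteq> Y"
  proof (rule ccontr)
    assume "\<not> thesis"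
    then have CX: "C = {X}" using that XC by blast
    obtain x where x: "x \<in> X" "x \<noteq> 0" using G_nz[OF XG d] by blast
    have "x \<notin> {0}" using x by simp
    then obtain M where M: "lsubspace sc M" "M \<subseteq> X" "x \<notin> M" "X = lin sc M x"
      using ZH[OF Xs sub_zero _ x(1)] sub0[OF Xs] by blast
    have MX: "codim1 sc M X" using codim1_intro[OF M(1) M(3)] M(4) by simp
    obtain v where v: "v \<notin> X" using G_nU[OF XG d] by blast
    have vM: "v \<notin> M" using v M(2) by blast
    let ?E = "lin sc M v"
    have ME: "codim1 sc M ?E" using codim1_intro[OF M(1) vM] .
    have EG: "?E \<in> GG sc" using starGG[OF XG M(1) MX ME] .
    have EX: "?E \<noteq> X" using lin_in[OF M(1)] v by blast
    have "adjacent sc X ?E" using star_adj[OF M(1) MX ME] EX by metis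
    then have "adj_clique sc {X, ?E}" using XG EG unfolding adj_clique_def
      using adjacent_sym by blast
    then have "{X, ?E} = C" using Cm CX by blast
    then show False using CX EX by blast
  qed
  have YG: "Y \<in> GG sc" using YC CG by blast
  have Ys: "lsubspace sc Y" using GG_sub[OF YG] .
  have adjXY: "adjacent sc X Y" using Cadj XC YC XY by blast
  let ?M = "X \<inter> Y" and ?N = "ssum X Y"
  have Ms: "lsubspace sc ?M" using sub_Int[OF Xs Ys] .
  have Ns: "lsubspace sc ?N" using ssum_sub[OF Xs Ys] .
  have MX: "codim1 sc ?M X" using adj_hyper[OF Xs Ys adjXY] .
  have XN: "codim1 sc X ?N" using adjXY unfolding adjacent_def by blast
  have Zs: "lsubspace sc Z" if "Z \<in> C" for Z using that CG GG_sub by blast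
  have adjXZ: "adjacent sc X Z" if "Z \<in> C" "Z \<noteq> X" for Z using that Cadj XC by metis
  have dich: "?M \<subseteq> Z \<or> Z \<subseteq> ?N" if ZC: "Z \<in> C" for Z
  proof (cases "Z = X \<or> Z = Y")
    case True then show ?thesis by blast
  next
    case False
    have "adjacent sc Y Z" using Cadj YC ZC False by metis
    then show ?thesis using key[OF Xs Ys Zs[OF ZC] adjXY adjXZ[OF ZC]] False by blast
  qed
  show ?thesis
  proof (cases "\<forall>Z\<in>C. ?M \<subseteq> Z")
    case True
    have sb: "star_base sc ?M" unfolding star_base_def using Ms XG MX by blast
    have "C \<subseteq> star sc ?M"
    proof
      fix Z assume ZC: "Z \<in> C"
      have "codim1 sc ?M Z"
      proof (cases "Z = X")
        case True then show ?thesis using MX by simp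
      next
        case False
        then show ?thesis using nbr[OF Ms Xs Zs[OF ZC] MX] True ZC adjXZ[OF ZC] by blast
      qed
      then show "Z \<in> star sc ?M" using Zs[OF ZC] unfolding star_def by blast
    qed
    then have "star sc ?M = C" using Cm star_clique[OF sb] by blast
    then show ?thesis using sb by blast
  next
    case False
    then obtain Z0 where Z0C: "Z0 \<in> C" and MZ0: "\<not> ?M \<subseteq> Z0" by blast
    have Z0N: "Z0 \<subseteq> ?N" using dich[OF Z0C] MZ0 by blast
    have Z0X: "Z0 \<noteq> X" using MZ0 by blast
    have allN: "Z \<subseteq> ?N" if ZC: "Z \<in> C" for Z
    proof (rule ccontr)
      assume nZ: "\<not> Z \<subseteq> ?N"
      have MZ: "?M \<subseteq> Z" using dich[OF ZC] nZ by blast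
      have ZX: "Z \<noteq> X" using nZ ssum_sup1[OF Ys] by blast
      have ZZ0: "Z0 \<noteq> Z" using nZ Z0N by blast
      show False using mixed[OF Xs Ys Zs[OF Z0C] Zs[OF ZC] adjXY adjXZ[OF Z0C Z0X] adjXZ[OF ZC ZX]
          Cadj[OF Z0C ZC ZZ0] Z0N MZ0 MZ nZ] .
    qed
    have tb: "top_base sc ?N" unfolding top_base_def using Ns XG XN by blast
    have "C \<subseteq> topset sc ?N"
    proof
      fix Z assume ZC: "Z \<in> C"
      have "codim1 sc Z ?N"
      proof (cases "Z = X")
        case True then show ?thesis using XN by simp
      next
        case False
        then show ?thesis using nbr2[OF Xs Zs[OF ZC] XN allN[OF ZC] adjXZ[OF ZC]] by blast
      qed
      then show "Z \<in> topset sc ?N" using Zs[OF ZC] unfolding topset_def by blast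
    qed
    then have "topset sc ?N = C" using Cm top_clique[OF tb] by blast
    then show ?thesis using tb by blast
  qed
qed

end

theorem proposition2p4:
  fixes sc :: "'k::division_ring \<Rightarrow> 'v::ab_group_add \<Rightarrow> 'v"
  assumes "left_vector_space sc"
    and "dim_gt_2 sc"
    and "GG sc \<noteq> {}"
  shows "max_adj_clique sc C \<longleftrightarrow>
           (\<exists>M. star_base sc M \<and> C = star sc M) \<or> (\<exists>N. top_base sc N \<and> C = topset sc N)"
proof -
  interpret lvs sc by (rule lvs.intro) (rule assms(1))
  show ?thesis
    using maxc_cases[OF assms(2,3)] star_maxc[OF _ assms(2)] top_maxc[OF _ assms(2)] by blast
qed

end
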